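(* Let $p>0$, $N\ge 2$, $1\le K\le N-1$, and let $\alpha_1,\dots,\alpha_N>0$ satisfy $$\sum_{j=1}^K\alpha_j^{-2/p}=\sum_{j=K+1}^N\alpha_j^{-2/p}.$$ Then there exists a one-parameter family of solutions $\Phi=(\phi_1,\dots,\phi_N)^T\in H^2_\Gamma$ of the stationary NLS equation $$-\phi_j''+\phi_j-(p+1)\alpha_j^2|\phi_j|^{2p}\phi_j=0\ \text{ on }\mathbb{R}^+,\quad j=1,\dots,N,$$ given by $$\phi_j(x)=\begin{cases}\alpha_j^{-1/p}\phi(x+a),& j=1,\dots,K,\\ \alpha_j^{-1/p}\phi(x-a),& j=K+1,\dots,N,\end{cases}$$ where $\phi(x)=\operatorname{sech}^{1/p}(px)$ and $a\in\mathbb{R}$ is arbitrary.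
   Context: $\Gamma$ is a star graph of $N$ half-lines $\mathbb{R}^+$ joined at the vertex $x=0$. $H^1_\Gamma=\{\Psi\in\oplus_{j=1}^NH^1(\mathbb{R}^+):\alpha_1^{1/p}\psi_1(0)=\dots=\alpha_N^{1/p}\psi_N(0)\}$ and $H^2_\Gamma=\{\Psi\in\oplus_{j=1}^NH^2(\mathbb{R}^+)\cap H^1_\Gamma:\sum_{j=1}^N\alpha_j^{-1/p}\psi_j'(0)=0\}$ (one-sided values at $x=0$). *)

theory Defs
  imports "HOL-Analysis.Analysis"
begin

definition test_fun :: "(real \<Rightarrow> real) \<Rightarrow> bool" where
  "test_fun \<psi> \<longleftrightarrow>
     (\<forall>n x. ((deriv ^^ n) \<psi>) differentiable (at x)) \<and>
     (\<exists>K. compact K \<and> K \<subseteq> {0<..} \<and> (\<forall>x. x \<notin> K \<longrightarrow> \<psi> x = 0))"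

definition L2_half :: "(real \<Rightarrow> real) \<Rightarrow> bool" where
  "L2_half f \<longleftrightarrow>
     (\<lambda>x. indicator {0<..} x * f x) \<in> borel_measurable lborel \<and>
     set_integrable lborel {0<..} (\<lambda>x. (f x)\<^sup>2)"

definition weak_deriv :: "(real \<Rightarrow> real) \<Rightarrow> (real \<Rightarrow> real) \<Rightarrow> bool" where
  "weak_deriv f g \<longleftrightarrow>
     (\<forall>\<psi>. test_fun \<psi> \<longrightarrow>
        (LINT x:{0<..}|lborel. f x * deriv \<psi> x) = - (LINT x:{0<..}|lborel. g x * \<psi> x))"

definition H1_half :: "(real \<Rightarrow> real) \<Rightarrow> bool" where
  "H1_half f \<longleftrightarrow> L2_half f \<and> (\<exists>g. L2_half g \<and> weak_deriv f g)"

definition H2_half :: "(real \<Rightarrow> real) \<Rightarrow> bool" where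
  "H2_half f \<longleftrightarrow> L2_half f \<and> (\<exists>g. H1_half g \<and> weak_deriv f g)"

definition trace0 :: "(real \<Rightarrow> real) \<Rightarrow> real \<Rightarrow> bool" where
  "trace0 f c \<longleftrightarrow>
     (\<exists>h. continuous_on {0..} h \<and> (AE x in lborel. x > 0 \<longrightarrow> h x = f x) \<and> h 0 = c)"

text \<open>The space H^1_Gamma on the star graph with N half-lines (edges indexed 1..N).\<close>
definition H1_Gamma :: "nat \<Rightarrow> real \<Rightarrow> (nat \<Rightarrow> real) \<Rightarrow> (nat \<Rightarrow> real \<Rightarrow> real) \<Rightarrow> bool" where
  "H1_Gamma N p \<alpha> \<Psi> \<longleftrightarrow>
     (\<forall>j\<in>{1..N}. H1_half (\<Psi> j)) \<and>
     (\<exists>v. \<forall>j\<in>{1..N}. \<exists>c. trace0 (\<Psi> j) c \<and> \<alpha> j powr (1/p) * c = v)"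

definition H2_Gamma :: "nat \<Rightarrow> real \<Rightarrow> (nat \<Rightarrow> real) \<Rightarrow> (nat \<Rightarrow> real \<Rightarrow> real) \<Rightarrow> bool" where
  "H2_Gamma N p \<alpha> \<Psi> \<longleftrightarrow>
     (\<forall>j\<in>{1..N}. H2_half (\<Psi> j)) \<and> H1_Gamma N p \<alpha> \<Psi> \<and>
     (\<exists>d c. (\<forall>j\<in>{1..N}. weak_deriv (\<Psi> j) (d j) \<and> H1_half (d j) \<and> trace0 (d j) (c j)) \<and>
            (\<Sum>j=1..N. \<alpha> j powr (-1/p) * c j) = 0)"

definition solves_NLS :: "real \<Rightarrow> real \<Rightarrow> (real \<Rightarrow> real) \<Rightarrow> bool" where
  "solves_NLS p a u \<longleftrightarrow>
     (\<exists>d1 d2. \<forall>x>0. (u has_real_derivative d1 x) (at x) \<and> (d1 has_real_derivative d2 x) (at x) \<and>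
        - d2 x + u x - (p + 1) * a\<^sup>2 * \<bar>u x\<bar> powr (2 * p) * u x = 0)"

definition phi0 :: "real \<Rightarrow> real \<Rightarrow> real" where
  "phi0 p x = (1 / cosh (p * x)) powr (1 / p)"

end

theory Submission
  imports Defs
begin


lemma exp_int: "set_integrable lborel {0<..} (\<lambda>x::real. exp (-x))"
proof -
  have "(\<lambda>x::real. exp (-1*x)) absolutely_integrable_on {0..}"
    by (intro nonnegative_absolutely_integrable_1 integrable_on_exp_minus_to_infinity) auto
  then have "set_integrable lebesgue {0..} (\<lambda>x::real. exp (-x))" by simp
  then have "set_integrable lborel {0..} (\<lambda>x::real. exp (-x))"
    unfolding set_integrable_def
    by (subst (asm) integrable_completion) (auto intro!: borel_measurable_continuous_on_indicator continuous_intros)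
  then show ?thesis by (rule set_integrable_subset) auto
qed

lemma L2_of_bound:
  assumes c: "continuous_on UNIV f" and b: "\<And>x. x > 0 \<Longrightarrow> \<bar>f x\<bar> \<le> C * exp (-x)"
  shows "L2_half f"
proof -
  have [measurable]: "f \<in> borel_measurable borel" using c by (rule borel_measurable_continuous_onI)
  have m: "(\<lambda>x. indicator {0<..} x * f x) \<in> borel_measurable lborel" by measurable
  have "set_integrable lborel {0<..} (\<lambda>x. (f x)\<^sup>2)"
    unfolding set_integrable_def
  proof (rule Bochner_Integration.integrable_bound [OF _ _ AE_I2])
    show "integrable lborel (\<lambda>x. indicat_real {0<..} x *\<^sub>R (C^2 * exp (-x)))"
      using exp_int[THEN set_integrable_mult_right[where a="C^2"]] unfolding set_integrable_def by simp
    show "(\<lambda>x. indicat_real {0<..} x *\<^sub>R (f x)\<^sup>2) \<in> borel_measurable lborel" by measurable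
    fix x :: real
    show "norm (indicat_real {0<..} x *\<^sub>R (f x)\<^sup>2) \<le> norm (indicat_real {0<..} x *\<^sub>R (C^2 * exp (-x)))"
    proof (cases "x > 0")
      case True
      have "\<bar>f x\<bar>^2 \<le> (C * exp (-x))^2" using b[OF True] by (intro power_mono) auto
      also have "\<dots> = C^2 * exp(-x) * exp (-x)" by (simp add: power2_eq_square)
      also have "\<dots> \<le> C^2 * exp(-x)" using True by (intro mult_left_le) auto
      finally show ?thesis using True by simp
    qed simp
  qed
  then show ?thesis unfolding L2_half_def using m by simp
qed



lemma lint_to_integral:
  fixes g :: "real \<Rightarrow> real"
  assumes "continuous_on UNIV g" "0 < l" "l \<le> u" "\<And>x. x \<notin> {l..u} \<Longrightarrow> g x = 0"
  shows "(LINT x:{0<..}|lborel. g x) = integral {l..u} g"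
proof -
  have eq: "(\<lambda>x. indicator {0<..} x *\<^sub>R g x) = (\<lambda>x. indicator {l..u} x *\<^sub>R g x)"
    using assms(2,4) by (auto simp: indicator_def fun_eq_iff)
  have "set_integrable lborel {l..u} g" unfolding set_integrable_def
    by (rule borel_integrable_compact) (auto intro: continuous_on_subset[OF assms(1)])
  then have "(LINT x:{l..u}|lborel. g x) = integral {l..u} g"
    by (rule set_borel_integral_eq_integral)
  then show ?thesis unfolding set_lebesgue_integral_def eq .
qed

lemma weak_deriv_classical:
  assumes D: "\<And>x. (f has_real_derivative f' x) (at x)" and C: "continuous_on UNIV f'"
  shows "weak_deriv f f'"
  unfolding weak_deriv_def
proof (intro allI impI)
  fix \<psi> assume T: "test_fun \<psi>"
  then obtain K where K: "compact K" "K \<subseteq> {0<..}" "\<And>x. x \<notin> K \<Longrightarrow> \<psi> x = 0"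
    unfolding test_fun_def by blast
  have dif0: "\<psi> differentiable (at x)" for x using T unfolding test_fun_def
  proof - have "((deriv ^^ 0) \<psi>) differentiable (at x)" using T unfolding test_fun_def by blast
    then show ?thesis by simp qed
  have dif1: "deriv \<psi> differentiable (at x)" for x using T unfolding test_fun_def
  proof - have "((deriv ^^ 1) \<psi>) differentiable (at x)" using T unfolding test_fun_def by blast
    then show ?thesis by simp qed
  have Dpsi: "(\<psi> has_real_derivative deriv \<psi> x) (at x)" for x
    using dif0 DERIV_deriv_iff_real_differentiable by blast
  have cpsi: "continuous_on UNIV \<psi>"
    using dif0 by (simp add: continuous_at_imp_continuous_on differentiable_imp_continuous_within)
  have cdpsi: "continuous_on UNIV (deriv \<psi>)"
    using dif1 by (simp add: continuous_at_imp_continuous_on differentiable_imp_continuous_within)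
  have cf: "continuous_on UNIV f"
    using D by (meson DERIV_isCont continuous_at_imp_continuous_on)
  have dz: "deriv \<psi> x = 0" if "x \<notin> K" for x
  proof -
    have "((\<lambda>_. 0::real) has_real_derivative 0) (at x)" by simp
    then have "(\<psi> has_real_derivative 0) (at x)"
      by (rule has_field_derivative_transform_within_open[where S="- K"])
         (use K that compact_imp_closed in \<open>auto simp: open_Compl\<close>)
    then show ?thesis using Dpsi DERIV_unique by blast
  qed
  obtain l u where lu: "0 < l" "l \<le> u" "K \<subseteq> {l<..<u}"
  proof (cases "K = {}")
    case True then show ?thesis using that[of 1 2] by auto
  next
    case False
    obtain m where m: "m \<in> K" "\<And>t. t \<in> K \<Longrightarrow> m \<le> t" using compact_attains_inf[OF K(1) False] by blast
    obtain M where M: "M \<in> K" "\<And>t. t \<in> K \<Longrightarrow> t \<le> M" using compact_attains_sup[OF K(1) False] by blast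
    have "m > 0" using m K(2) by auto
    show ?thesis
    proof (rule that[of "m/2" "M+1"])
      show "K \<subseteq> {m / 2<..<M + 1}"
      proof
        fix t assume "t \<in> K" then show "t \<in> {m / 2<..<M + 1}" using m(2)[of t] M(2)[of t] \<open>m > 0\<close> by auto
      qed
      show "m/2 \<le> M+1" using m M \<open>m > 0\<close> by fastforce
    qed (use \<open>m > 0\<close> in auto)
  qed
  have z1: "\<psi> x = 0" if "x \<notin> {l<..<u}" for x using K(3) lu that by blast
  have z2: "deriv \<psi> x = 0" if "x \<notin> {l<..<u}" for x using dz lu that by blast
  have c1: "continuous_on UNIV (\<lambda>x. f x * deriv \<psi> x)" by (intro continuous_intros cf cdpsi)
  have c2: "continuous_on UNIV (\<lambda>x. f' x * \<psi> x)" by (intro continuous_intros C cpsi)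
  have i1: "(LINT x:{0<..}|lborel. f x * deriv \<psi> x) = integral {l..u} (\<lambda>x. f x * deriv \<psi> x)"
    by (rule lint_to_integral[OF c1 lu(1,2)]) (use z2 in auto)
  have i2: "(LINT x:{0<..}|lborel. f' x * \<psi> x) = integral {l..u} (\<lambda>x. f' x * \<psi> x)"
    by (rule lint_to_integral[OF c2 lu(1,2)]) (use z1 in auto)
  have "((\<lambda>x. f' x * \<psi> x + f x * deriv \<psi> x) has_integral (f u * \<psi> u - f l * \<psi> l)) {l..u}"
  proof (rule fundamental_theorem_of_calculus[OF lu(2)])
    fix x assume "x \<in> {l..u}"
    have "((\<lambda>x. f x * \<psi> x) has_real_derivative (f' x * \<psi> x + f x * deriv \<psi> x)) (at x)"
      using DERIV_mult[OF D Dpsi] by (simp add: mult.commute)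
    then show "((\<lambda>x. f x * \<psi> x) has_vector_derivative (f' x * \<psi> x + f x * deriv \<psi> x)) (at x within {l..u})"
      by (simp add: has_real_derivative_iff_has_vector_derivative has_vector_derivative_at_within)
  qed
  moreover have "\<psi> u = 0" "\<psi> l = 0" using z1 by auto
  ultimately have h: "((\<lambda>x. f' x * \<psi> x + f x * deriv \<psi> x) has_integral 0) {l..u}" by simp
  have int1: "(\<lambda>x. f x * deriv \<psi> x) integrable_on {l..u}"
    by (rule integrable_continuous_interval) (rule continuous_on_subset[OF c1], auto)
  have int2: "(\<lambda>x. f' x * \<psi> x) integrable_on {l..u}"
    by (rule integrable_continuous_interval) (rule continuous_on_subset[OF c2], auto)
  have "integral {l..u} (\<lambda>x. f' x * \<psi> x) + integral {l..u} (\<lambda>x. f x * deriv \<psi> x) = 0"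
  proof -
    have "integral {l..u} (\<lambda>x. f' x * \<psi> x + f x * deriv \<psi> x) = 0" using h by (rule integral_unique)
    then show ?thesis using integral_add[OF int2 int1] by simp
  qed
  then show "(LINT x:{0<..}|lborel. f x * deriv \<psi> x) = - (LINT x:{0<..}|lborel. f' x * \<psi> x)"
    using i1 i2 by linarith
qed



lemma phi0_alt: "phi0 p x = exp (- ln (cosh (p*x)) / p)"
  unfolding phi0_def powr_def by (simp add: ln_div)

lemma phi0_pos: "phi0 p x > 0" unfolding phi0_alt by simp

lemma phi0_even: "phi0 p (-x) = phi0 p x" unfolding phi0_def by simp

definition d1 :: "real \<Rightarrow> real \<Rightarrow> real" where
  "d1 p x = - phi0 p x * tanh (p*x)"
definition d2 :: "real \<Rightarrow> real \<Rightarrow> real" where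
  "d2 p x = phi0 p x * (tanh (p*x)^2 - p * (1 - tanh (p*x)^2))"

lemma d1_odd: "d1 p (-x) = - d1 p x" unfolding d1_def phi0_even by simp

lemma phi0_deriv: assumes "p > 0" shows "(phi0 p has_real_derivative d1 p x) (at x)"
proof -
  have "((\<lambda>x. exp (- ln (cosh (p*x)) / p)) has_real_derivative
      exp (- ln (cosh (p*x)) / p) * (- (sinh (p*x) * p / cosh (p*x)) / p)) (at x)"
    by (auto intro!: derivative_eq_intros)
  moreover have "exp (- ln (cosh (p*x)) / p) * (- (sinh (p*x) * p / cosh (p*x)) / p) = d1 p x"
    using assms unfolding d1_def phi0_alt tanh_def by simp
  ultimately show ?thesis unfolding phi0_alt[abs_def] by simp
qed

lemma d1_deriv: assumes "p > 0" shows "(d1 p has_real_derivative d2 p x) (at x)"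
proof -
  have "((\<lambda>x. - phi0 p x * tanh (p*x)) has_real_derivative
      - (d1 p x * tanh (p*x) + phi0 p x * ((1 - tanh (p*x)^2) * p))) (at x)"
    by (auto intro!: derivative_eq_intros phi0_deriv[OF assms])
  moreover have "- (d1 p x * tanh (p*x) + phi0 p x * ((1 - tanh (p*x)^2) * p)) = d2 p x"
    unfolding d1_def d2_def by (simp add: algebra_simps power2_eq_square)
  ultimately show ?thesis unfolding d1_def[abs_def] by simp
qed

lemma phi0_cont: "p > 0 \<Longrightarrow> continuous_on UNIV (phi0 p)"
  using phi0_deriv by (meson DERIV_isCont continuous_at_imp_continuous_on)

lemma d1_cont: "p > 0 \<Longrightarrow> continuous_on UNIV (d1 p)"
  using d1_deriv by (meson DERIV_isCont continuous_at_imp_continuous_on)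

lemma d2_cont: assumes "p > 0" shows "continuous_on UNIV (d2 p)"
proof -
  have c: "continuous_on UNIV (\<lambda>x. tanh (p*x))"
    by (intro continuous_intros) auto
  show ?thesis unfolding d2_def[abs_def]
    by (intro continuous_intros phi0_cont[OF assms] c)
qed

lemma tanh_sq: "1 - tanh (y::real)^2 = 1 / cosh y ^ 2"
proof -
  have c: "cosh y ^ 2 \<noteq> 0" by simp
  have "1 - tanh y ^2 = (cosh y ^ 2 - sinh y ^ 2) / cosh y ^ 2"
    unfolding tanh_def using c by (simp add: field_simps power_divide)
  then show ?thesis using cosh_square_eq[of y] by simp
qed

lemma phi0_powr: assumes "p > 0" shows "phi0 p x powr (2*p) = 1 / cosh (p*x) ^ 2"
proof -
  have "phi0 p x powr (2*p) = (1 / cosh (p*x)) powr (1/p * (2*p))"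
    unfolding phi0_def by (simp add: powr_powr)
  also have "\<dots> = (1 / cosh (p*x)) powr 2" using assms by simp
  also have "\<dots> = 1 / cosh (p*x) ^ 2" by (simp add: powr_realpow power_divide)
  finally show ?thesis .
qed

lemma d2_eq: assumes "p > 0" shows "d2 p x = phi0 p x - (p+1) * phi0 p x powr (2*p) * phi0 p x"
  unfolding d2_def phi0_powr[OF assms] tanh_sq[symmetric] by (simp add: algebra_simps)

lemma cosh_ge: "cosh (z::real) \<ge> exp \<bar>z\<bar> / 2"
proof (cases "z \<ge> 0")
  case True then show ?thesis unfolding cosh_def by simp
next
  case False
  have "cosh (-z) \<ge> exp (-z) / 2" unfolding cosh_def by simp
  then show ?thesis using False by simp
qed

lemma phi0_bound: assumes "p > 0" shows "phi0 p y \<le> exp (ln 2 / p - \<bar>y\<bar>)"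
proof -
  have "exp (p * \<bar>y\<bar>) / 2 \<le> cosh (p*y)" using cosh_ge[of "p*y"] assms by (simp add: abs_mult)
  then have "ln (exp (p * \<bar>y\<bar>) / 2) \<le> ln (cosh (p*y))" by (subst ln_le_cancel_iff) auto
  then have "p * \<bar>y\<bar> - ln 2 \<le> ln (cosh (p*y))" by (simp add: ln_div)
  then have "- ln (cosh (p*y)) / p \<le> ln 2 / p - \<bar>y\<bar>" using assms by (simp add: field_simps)
  then show ?thesis unfolding phi0_alt by simp
qed

lemma phi0_shift_bound: assumes "p > 0" "x > 0"
  shows "phi0 p (x+s) \<le> exp (ln 2 / p + \<bar>s\<bar>) * exp (-x)"
proof -
  have "phi0 p (x+s) \<le> exp (ln 2 / p - \<bar>x+s\<bar>)" by (rule phi0_bound[OF assms(1)])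
  also have "\<dots> \<le> exp (ln 2 / p + \<bar>s\<bar> + - x)" using assms by simp
  also have "\<dots> = exp (ln 2 / p + \<bar>s\<bar>) * exp (-x)" by (rule exp_add)
  finally show ?thesis .
qed

lemma d1_abs: "\<bar>d1 p x\<bar> \<le> phi0 p x"
proof -
  have "\<bar>tanh (p*x)\<bar> \<le> 1" using tanh_real_bounds[of "p*x"] by auto
  then show ?thesis unfolding d1_def using phi0_pos[of p x]
    by (simp add: abs_mult mult_left_le)
qed

lemma d2_abs: assumes "p > 0" shows "\<bar>d2 p x\<bar> \<le> (1 + p) * phi0 p x"
proof -
  define t where "t = tanh (p*x)"
  have t: "t^2 \<le> 1" "0 \<le> t^2" using tanh_real_bounds[of "p*x"] unfolding t_def
    by (auto simp: abs_square_le_1)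
  have "\<bar>t^2 - p * (1 - t^2)\<bar> \<le> 1 + p" using t assms
    by (smt (verit) mult_left_le mult_nonneg_nonneg)
  then show ?thesis unfolding d2_def t_def[symmetric] using phi0_pos[of p x]
    by (simp add: abs_mult mult.commute mult_right_mono)
qed



lemma shiftD: fixes f f' :: "real \<Rightarrow> real" and c s x :: real shows "(f has_real_derivative f' (x+s)) (at (x+s)) \<Longrightarrow> ((\<lambda>x. c * f (x+s)) has_real_derivative c * f' (x+s)) (at x)"
  using DERIV_cmult DERIV_shift by blast

lemma cont_shift: fixes f :: "real \<Rightarrow> real" and c s :: real shows "continuous_on UNIV f \<Longrightarrow> continuous_on UNIV (\<lambda>x. c * f (x+s))"
proof -
  assume c: "continuous_on UNIV f"
  have "continuous_on UNIV (\<lambda>x. f (x+s))"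
    by (rule continuous_on_compose2[OF c]) (auto intro!: continuous_intros)
  then show ?thesis by (intro continuous_intros)
qed

lemma trace_cont: "continuous_on UNIV f \<Longrightarrow> trace0 f (f 0)"
  unfolding trace0_def by (intro exI[of _ f]) (auto intro: continuous_on_subset)

lemma edge:
  fixes c s :: real
  assumes p: "p > 0"
  defines "f \<equiv> \<lambda>x. c * phi0 p (x+s)" and "g \<equiv> \<lambda>x. c * d1 p (x+s)" and "h \<equiv> \<lambda>x. c * d2 p (x+s)"
  shows "H2_half f" "weak_deriv f g" "H1_half g" "continuous_on UNIV f" "continuous_on UNIV g"
    "\<And>x. (f has_real_derivative g x) (at x)" "\<And>x. (g has_real_derivative h x) (at x)"
proof -
  define C where "C = exp (ln 2 / p + \<bar>s\<bar>)"
  show Df: "(f has_real_derivative g x) (at x)" for x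
    unfolding f_def g_def by (rule shiftD) (rule phi0_deriv[OF p])
  show Dg: "(g has_real_derivative h x) (at x)" for x
    unfolding h_def g_def by (rule shiftD) (rule d1_deriv[OF p])
  show cf: "continuous_on UNIV f" unfolding f_def by (rule cont_shift[OF phi0_cont[OF p]])
  show cg: "continuous_on UNIV g" unfolding g_def by (rule cont_shift[OF d1_cont[OF p]])
  have ch: "continuous_on UNIV h" unfolding h_def by (rule cont_shift[OF d2_cont[OF p]])
  have B: "phi0 p (x+s) \<le> C * exp (-x)" if "x > 0" for x
    unfolding C_def by (rule phi0_shift_bound[OF p that])
  have "L2_half f"
  proof (rule L2_of_bound[OF cf])
    fix x :: real assume "x > 0"
    have "\<bar>phi0 p (x+s)\<bar> \<le> C * exp (-x)" using B[OF \<open>x>0\<close>] phi0_pos[of p "x+s"] by linarith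
    then show "\<bar>f x\<bar> \<le> (\<bar>c\<bar> * C) * exp (-x)" unfolding f_def
      by (auto simp only: abs_mult mult.assoc intro!: mult_left_mono)
  qed
  moreover have "L2_half g"
  proof (rule L2_of_bound[OF cg])
    fix x :: real assume "x > 0"
    have "\<bar>d1 p (x+s)\<bar> \<le> C * exp (-x)" using B[OF \<open>x>0\<close>] d1_abs[of p "x+s"] by linarith
    then show "\<bar>g x\<bar> \<le> (\<bar>c\<bar> * C) * exp (-x)" unfolding g_def
      by (auto simp only: abs_mult mult.assoc intro!: mult_left_mono)
  qed
  moreover have "L2_half h"
  proof (rule L2_of_bound[OF ch])
    fix x :: real assume "x > 0"
    have "(1+p) * phi0 p (x+s) \<le> (1+p) * (C * exp (-x))" using B[OF \<open>x>0\<close>] p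
      by (intro mult_left_mono) auto
    then have "\<bar>d2 p (x+s)\<bar> \<le> (1+p) * (C * exp (-x))" using d2_abs[OF p, of "x+s"] by linarith
    then show "\<bar>h x\<bar> \<le> (\<bar>c\<bar> * (1+p) * C) * exp (-x)" unfolding h_def
      by (auto simp only: abs_mult mult.assoc intro!: mult_left_mono)
  qed
  moreover show wf: "weak_deriv f g" by (rule weak_deriv_classical[OF Df cg])
  moreover have wg: "weak_deriv g h" by (rule weak_deriv_classical[OF Dg ch])
  ultimately show "H1_half g" "H2_half f" unfolding H1_half_def H2_half_def by blast+
qed

lemma nls_edge:
  assumes p: "p > 0" and al: "\<alpha> > 0"
  shows "solves_NLS p \<alpha> (\<lambda>x. \<alpha> powr (-1/p) * phi0 p (x+s))"
  unfolding solves_NLS_def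
proof (intro exI allI impI conjI)
  fix x :: real
  let ?c = "\<alpha> powr (-1/p)"
  show "((\<lambda>x. ?c * phi0 p (x+s)) has_real_derivative ?c * d1 p (x+s)) (at x)"
    by (rule shiftD) (rule phi0_deriv[OF p])
  show "((\<lambda>x. ?c * d1 p (x+s)) has_real_derivative ?c * d2 p (x+s)) (at x)"
    by (rule shiftD) (rule d1_deriv[OF p])
  define u where "u = phi0 p (x+s)"
  have u: "u > 0" unfolding u_def by (rule phi0_pos)
  have cpos: "?c > 0" using al by simp
  have "\<bar>?c * u\<bar> powr (2*p) = ?c powr (2*p) * u powr (2*p)"
    using u cpos by (simp add: powr_mult)
  also have "?c powr (2*p) = \<alpha> powr (-2)" using p by (simp add: powr_powr)
  finally have e: "\<bar>?c * u\<bar> powr (2*p) = \<alpha> powr (-2) * u powr (2*p)" .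
  have a2': "\<alpha> powr 2 * \<alpha> powr (-2) = 1" using al
    by (simp only: powr_add[symmetric]) simp
  have "\<alpha>\<^sup>2 = \<alpha> powr 2" using al by (simp add: powr_realpow)
  then have a2: "\<alpha>\<^sup>2 * \<alpha> powr (-2) = 1" using a2' by simp
  have "(p + 1) * \<alpha>\<^sup>2 * \<bar>?c * u\<bar> powr (2 * p) * (?c * u) = (p+1) * u powr (2*p) * (?c * u)"
    unfolding e using a2 by (metis (no_types, lifting) mult.assoc mult.left_commute mult_1)
  then show "- (?c * d2 p (x+s)) + ?c * phi0 p (x+s) -
       (p + 1) * \<alpha>\<^sup>2 * \<bar>?c * phi0 p (x+s)\<bar> powr (2 * p) * (?c * phi0 p (x+s)) = 0"
    unfolding d2_eq[OF p] u_def[symmetric] by (simp add: algebra_simps)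
qed



theorem lemma3p1:
  fixes p :: real and N K :: nat and \<alpha> :: "nat \<Rightarrow> real" and a :: real
  assumes "p > 0" and "N \<ge> 2" and "1 \<le> K" and "K \<le> N - 1"
    and "\<forall>j\<in>{1..N}. \<alpha> j > 0"
    and "(\<Sum>j=1..K. \<alpha> j powr (-2/p)) = (\<Sum>j=K+1..N. \<alpha> j powr (-2/p))"
  defines "\<Phi> \<equiv> (\<lambda>j x. if j \<le> K then \<alpha> j powr (-1/p) * phi0 p (x + a)
                          else \<alpha> j powr (-1/p) * phi0 p (x - a))"
  shows "H2_Gamma N p \<alpha> \<Phi> \<and> (\<forall>j\<in>{1..N}. solves_NLS p (\<alpha> j) (\<Phi> j))"
proof -
  note p = assms(1)
  define \<sigma> where "\<sigma> j = (if j \<le> K then a else -a)" for j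
  have Phi: "\<Phi> j = (\<lambda>x. \<alpha> j powr (-1/p) * phi0 p (x + \<sigma> j))" for j
    unfolding \<Phi>_def \<sigma>_def by auto
  define d where "d j = (\<lambda>x. \<alpha> j powr (-1/p) * d1 p (x + \<sigma> j))" for j
  define c where "c j = \<alpha> j powr (-1/p) * d1 p (\<sigma> j)" for j
  note E = edge[OF p, of "\<alpha> j powr (-1/p)" "\<sigma> j" for j]
  have H2: "\<forall>j\<in>{1..N}. H2_half (\<Phi> j)" unfolding Phi using E(1) by blast
  have H1: "\<forall>j\<in>{1..N}. H1_half (\<Phi> j)" using H2 unfolding H2_half_def H1_half_def by blast
  have G1: "H1_Gamma N p \<alpha> \<Phi>"
    unfolding H1_Gamma_def
  proof (intro conjI H1, rule exI[of _ "phi0 p a"], intro ballI)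
    fix j assume j: "j \<in> {1..N}"
    have tr: "trace0 (\<Phi> j) (\<Phi> j 0)" unfolding Phi by (rule trace_cont[OF E(4)])
    have al: "\<alpha> j > 0" using assms(5) j by blast
    have "\<alpha> j powr (1/p) * \<alpha> j powr (-1/p) = 1" using al
      by (simp only: powr_add[symmetric]) simp
    moreover have "phi0 p (\<sigma> j) = phi0 p a" unfolding \<sigma>_def by (simp add: phi0_even)
    ultimately have "\<alpha> j powr (1/p) * \<Phi> j 0 = phi0 p a" unfolding Phi
      by (simp add: mult.assoc[symmetric])
    with tr show "\<exists>c. trace0 (\<Phi> j) c \<and> \<alpha> j powr (1/p) * c = phi0 p a" by blast
  qed
  have sq: "\<alpha> j powr (-1/p) * \<alpha> j powr (-1/p) = \<alpha> j powr (-2/p)" if "j \<in> {1..N}" for j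
  proof -
    have "\<alpha> j > 0" using assms(5) that by blast
    then have "\<alpha> j powr (-1/p) * \<alpha> j powr (-1/p) = \<alpha> j powr (-1/p + -1/p)"
      by (simp only: powr_add)
    also have "-1/p + -1/p = -2/p" by simp
    finally show ?thesis .
  qed
  have split: "{1..N} = {1..K} \<union> {K+1..N}" using assms(3,4) by auto
  have "(\<Sum>j=1..N. \<alpha> j powr (-1/p) * c j) =
        (\<Sum>j=1..K. \<alpha> j powr (-1/p) * c j) + (\<Sum>j=K+1..N. \<alpha> j powr (-1/p) * c j)"
    unfolding split by (rule sum.union_disjoint) auto
  also have "(\<Sum>j=1..K. \<alpha> j powr (-1/p) * c j) = (\<Sum>j=1..K. \<alpha> j powr (-2/p)) * d1 p a"
    unfolding sum_distrib_right
  proof (rule sum.cong[OF refl])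
    fix j assume j: "j \<in> {1..K}"
    then have "j \<in> {1..N}" using assms(4) by auto
    then show "\<alpha> j powr (-1/p) * c j = \<alpha> j powr (-2/p) * d1 p a"
      using sq[of j] j unfolding c_def \<sigma>_def by (simp add: mult.assoc[symmetric])
  qed
  also have "(\<Sum>j=K+1..N. \<alpha> j powr (-1/p) * c j) = (\<Sum>j=K+1..N. \<alpha> j powr (-2/p)) * (- d1 p a)"
    unfolding sum_distrib_right
  proof (rule sum.cong[OF refl])
    fix j assume j: "j \<in> {K+1..N}"
    then have "j \<in> {1..N}" using assms(3) by auto
    then show "\<alpha> j powr (-1/p) * c j = \<alpha> j powr (-2/p) * (- d1 p a)"
      using sq[of j] j unfolding c_def \<sigma>_def by (simp add: mult.assoc[symmetric] d1_odd)
  qed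
  finally have S: "(\<Sum>j=1..N. \<alpha> j powr (-1/p) * c j) = 0" using assms(6) by simp
  have G2: "H2_Gamma N p \<alpha> \<Phi>"
    unfolding H2_Gamma_def
  proof (intro conjI H2 G1 exI[of _ d] exI[of _ c] ballI S)
    fix j assume "j \<in> {1..N}"
    show "weak_deriv (\<Phi> j) (d j)" unfolding Phi d_def by (rule E(2))
    show "H1_half (d j)" unfolding d_def by (rule E(3))
    show "trace0 (d j) (c j)" using trace_cont[OF E(5)[of j]] unfolding d_def c_def by simp
  qed
  have "\<forall>j\<in>{1..N}. solves_NLS p (\<alpha> j) (\<Phi> j)"
    unfolding Phi using nls_edge[OF p] assms(5) by blast
  with G2 show ?thesis by blast
qed

end
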